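(* Let $S$ be a finite semigroup. (i) If $S$ is monogenic, then $\sigma_s(S)=\infty$. (ii) If $S$ is a group, then $\sigma_s(S)=\sigma_g(S)$. (iii) If $S$ is neither monogenic nor a group, then $\sigma_s(S)=2$.
   Context: A semigroup is a nonempty set with an associative binary operation; a subsemigroup is a nonempty subset closed under the operation. A semigroup is monogenic if it is generated (as a semigroup) by a single element. For a semigroup $S$, $\sigma_s(S)$ denotes the least positive integer $n$ such that $S$ is the union of $n$ proper subsemigroups, and $\sigma_s(S)=\infty$ if no such finite $n$ exists. For a group $G$, $\sigma_g(G)$ is defined analogously using proper subgroups. *)

theory Defs
  imports "HOL-Algebra.Group" "HOL-Library.Extended_Nat"
begin

text \<open>A semigroup is given by a HOL-Algebra structure whose carrier is nonempty,
closed under the multiplication, with associative multiplication.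
The field one of the record is ignored.\<close>

definition is_semigroup :: "('a, 'b) monoid_scheme \<Rightarrow> bool" where
  "is_semigroup G \<longleftrightarrow> carrier G \<noteq> {} \<and>
     (\<forall>x\<in>carrier G. \<forall>y\<in>carrier G. x \<otimes>\<^bsub>G\<^esub> y \<in> carrier G) \<and>
     (\<forall>x\<in>carrier G. \<forall>y\<in>carrier G. \<forall>z\<in>carrier G.
        (x \<otimes>\<^bsub>G\<^esub> y) \<otimes>\<^bsub>G\<^esub> z = x \<otimes>\<^bsub>G\<^esub> (y \<otimes>\<^bsub>G\<^esub> z))"

definition subsemigroup :: "'a set \<Rightarrow> ('a, 'b) monoid_scheme \<Rightarrow> bool" where
  "subsemigroup H G \<longleftrightarrow> H \<noteq> {} \<and> H \<subseteq> carrier G \<and>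
     (\<forall>x\<in>H. \<forall>y\<in>H. x \<otimes>\<^bsub>G\<^esub> y \<in> H)"

definition sgr_generated :: "('a, 'b) monoid_scheme \<Rightarrow> 'a \<Rightarrow> 'a set" where
  "sgr_generated G a = \<Inter>{H. H \<subseteq> carrier G \<and> a \<in> H \<and>
                             (\<forall>x\<in>H. \<forall>y\<in>H. x \<otimes>\<^bsub>G\<^esub> y \<in> H)}"

definition monogenic :: "('a, 'b) monoid_scheme \<Rightarrow> bool" where
  "monogenic G \<longleftrightarrow> (\<exists>a\<in>carrier G. sgr_generated G a = carrier G)"

definition is_group_sgr :: "('a, 'b) monoid_scheme \<Rightarrow> bool" where
  "is_group_sgr G \<longleftrightarrow> (\<exists>e. group (G\<lparr>one := e\<rparr>))"

definition sigma_s :: "('a, 'b) monoid_scheme \<Rightarrow> enat" where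
  "sigma_s G = (if \<exists>F. finite F \<and> (\<forall>H\<in>F. subsemigroup H G \<and> H \<noteq> carrier G) \<and> \<Union>F = carrier G
     then enat (LEAST n. \<exists>F. finite F \<and> card F = n \<and>
                 (\<forall>H\<in>F. subsemigroup H G \<and> H \<noteq> carrier G) \<and> \<Union>F = carrier G)
     else \<infinity>)"

definition sigma_g :: "('a, 'b) monoid_scheme \<Rightarrow> enat" where
  "sigma_g G = (if \<exists>F. finite F \<and> (\<forall>H\<in>F. subgroup H G \<and> H \<noteq> carrier G) \<and> \<Union>F = carrier G
     then enat (LEAST n. \<exists>F. finite F \<and> card F = n \<and>
                 (\<forall>H\<in>F. subgroup H G \<and> H \<noteq> carrier G) \<and> \<Union>F = carrier G)
     else \<infinity>)"

end

theory Submission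
  imports Defs
begin

definition clsd :: "('a \<Rightarrow> 'a \<Rightarrow> 'a) \<Rightarrow> 'a set \<Rightarrow> bool" where
  "clsd m H \<longleftrightarrow> (\<forall>x\<in>H. \<forall>y\<in>H. m x y \<in> H)"

definition rid :: "('a \<Rightarrow> 'a \<Rightarrow> 'a) \<Rightarrow> 'a set \<Rightarrow> 'a set \<Rightarrow> bool" where
  "rid m C I \<longleftrightarrow> I \<noteq> {} \<and> I \<subseteq> C \<and> (\<forall>x\<in>I. \<forall>s\<in>C. m x s \<in> I)"

lemma rid_clsd: "rid m C I \<Longrightarrow> clsd m I"
  unfolding rid_def clsd_def by blast

lemma cover_from_rid:
  assumes clos: "\<forall>x\<in>C. \<forall>y\<in>C. m x y \<in> C"
    and assoc: "\<forall>x\<in>C. \<forall>y\<in>C. \<forall>z\<in>C. m (m x y) z = m x (m y z)"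
    and fin: "finite C"
    and ng: "\<forall>x\<in>C. \<exists>H. H \<subseteq> C \<and> x \<in> H \<and> clsd m H \<and> H \<noteq> C"
    and ex: "\<exists>I. rid m C I \<and> I \<noteq> C"
  shows "\<exists>H1 H2. H1 \<noteq> {} \<and> H1 \<subseteq> C \<and> clsd m H1 \<and> H1 \<noteq> C \<and>
                 H2 \<noteq> {} \<and> H2 \<subseteq> C \<and> clsd m H2 \<and> H2 \<noteq> C \<and> H1 \<union> H2 = C"
proof -
  define P where "P = {I. rid m C I \<and> I \<noteq> C}"
  obtain I0 where I0: "I0 \<in> P" using ex P_def by blast
  have bnd: "\<forall>y. (\<exists>I\<in>P. card I = y) \<longrightarrow> y \<le> card C"
    using fin by (auto simp: P_def rid_def intro: card_mono)
  obtain k where k: "\<exists>I\<in>P. card I = k" and kmax: "\<forall>y. (\<exists>I\<in>P. card I = y) \<longrightarrow> y \<le> k"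
    using Nat.ex_has_greatest_nat[of "\<lambda>k. \<exists>I\<in>P. card I = k", OF _ bnd] I0 by blast
  obtain M where M: "M \<in> P" "card M = k" using k by blast
  have Mr: "rid m C M" and MC: "M \<noteq> C" using M by (auto simp: P_def)
  have Msub: "M \<subseteq> C" and Mne: "M \<noteq> {}" using Mr by (auto simp: rid_def)
  have big: "N = C" if "rid m C N" "M \<subset> N" for N
  proof (rule ccontr)
    assume "N \<noteq> C"
    then have "N \<in> P" using that by (auto simp: P_def)
    then have "card N \<le> k" using kmax by blast
    moreover have "finite N" using that fin by (auto simp: rid_def intro: finite_subset)
    then have "card M < card N" using that psubset_card_mono by blast
    ultimately show False using M by simp
  qed
  show ?thesis
  proof (cases "\<exists>N\<in>P. \<not> N \<subseteq> M")
    case True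
    then obtain N where N: "N \<in> P" "\<not> N \<subseteq> M" by blast
    have Nr: "rid m C N" and NC: "N \<noteq> C" using N by (auto simp: P_def)
    have "rid m C (M \<union> N)" using Mr Nr by (auto simp: rid_def)
    then have MN: "M \<union> N = C" using big N(2) by blast
    have f1: "M \<noteq> {}" "M \<subseteq> C" "clsd m M" using Mr MC rid_clsd[OF Mr] by (auto simp: rid_def)
    have f2: "N \<noteq> {}" "N \<subseteq> C" "clsd m N" using Nr NC rid_clsd[OF Nr] by (auto simp: rid_def)
    show ?thesis
      apply (rule exI[of _ M], rule exI[of _ N])
      using f1 f2 MC NC MN by metis
  next
    case False
    then have allM: "\<And>N. rid m C N \<Longrightarrow> N \<noteq> C \<Longrightarrow> N \<subseteq> M" by (auto simp: P_def)
    have Cne: "C \<noteq> {}" using Msub Mne by blast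
    have xr: "rid m C (m x ` C)" if "x \<in> C" for x
      using that Cne clos assoc by (auto simp: rid_def)
    show ?thesis
    proof (cases "\<exists>x\<in>C - M. m x ` C \<noteq> C")
      case True
      then obtain x where x: "x \<in> C" "x \<notin> M" "m x ` C \<noteq> C" by blast
      have "m x ` C \<subseteq> M" using allM[OF xr[OF x(1)] x(3)] .
      then have "rid m C (M \<union> {x})" using Mr x by (auto simp: rid_def)
      then have MxC: "M \<union> {x} = C" using big x(2) by blast
      obtain H where H: "H \<subseteq> C" "x \<in> H" "clsd m H" "H \<noteq> C" using ng x(1) by blast
      show ?thesis
        apply (rule exI[of _ M], rule exI[of _ H])
        using Mne Msub rid_clsd[OF Mr] MC H MxC by auto
    next
      case False
      then have surj: "\<And>x. x \<in> C - M \<Longrightarrow> m x ` C = C" by blast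
      have Xc: "clsd m (C - M)"
        unfolding clsd_def
      proof (intro ballI)
        fix x y assume xy: "x \<in> C - M" "y \<in> C - M"
        have mxy: "m x y \<in> C" using xy clos by blast
        show "m x y \<in> C - M"
        proof (rule ccontr)
          assume "m x y \<notin> C - M"
          then have "m x y \<in> M" using mxy by blast
          then have "m (m x y) ` C \<subseteq> M" using Mr by (auto simp: rid_def)
          moreover have "m (m x y) ` C = m x ` (m y ` C)"
            using xy assoc by (auto simp: image_iff) 
          ultimately show False using surj[OF xy(1)] surj[OF xy(2)] MC Msub by auto
        qed
      qed
      show ?thesis
        apply (rule exI[of _ M], rule exI[of _ "C - M"])
        using Mne Msub rid_clsd[OF Mr] MC Xc by auto
    qed
  qed
qed


lemma sg_facts:
  assumes "is_semigroup S"
  shows "carrier S \<noteq> {}" "\<forall>x\<in>carrier S. \<forall>y\<in>carrier S. x \<otimes>\<^bsub>S\<^esub> y \<in> carrier S"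
    "\<forall>x\<in>carrier S. \<forall>y\<in>carrier S. \<forall>z\<in>carrier S.
        (x \<otimes>\<^bsub>S\<^esub> y) \<otimes>\<^bsub>S\<^esub> z = x \<otimes>\<^bsub>S\<^esub> (y \<otimes>\<^bsub>S\<^esub> z)"
  using assms unfolding is_semigroup_def
  by (rule conjunct1, rule conjunct1[OF conjunct2], rule conjunct2[OF conjunct2])

lemma clsd_flip: "clsd (\<lambda>x y. m y x) H = clsd m H"
  unfolding clsd_def by blast

lemma sgr_props:
  assumes "is_semigroup S" "a \<in> carrier S"
  shows "sgr_generated S a \<subseteq> carrier S \<and> a \<in> sgr_generated S a \<and>
         clsd (\<lambda>x y. x \<otimes>\<^bsub>S\<^esub> y) (sgr_generated S a)"
  using assms unfolding sgr_generated_def is_semigroup_def clsd_def by blast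

lemma sgr_min:
  assumes "H \<subseteq> carrier S" "a \<in> H" "\<forall>x\<in>H. \<forall>y\<in>H. x \<otimes>\<^bsub>S\<^esub> y \<in> H"
  shows "sgr_generated S a \<subseteq> H"
  using assms unfolding sgr_generated_def by blast

lemma (in group) fin_closed_inv:
  assumes "finite H" "H \<subseteq> carrier G" "a \<in> H" "\<forall>x\<in>H. \<forall>y\<in>H. x \<otimes> y \<in> H"
  shows "inv a \<in> H"
proof -
  have aG: "a \<in> carrier G" using assms by blast
  have "inj_on ((\<otimes>) a) H" unfolding inj_on_def
  proof (intro ballI impI)
    fix x y assume xy: "x \<in> H" "y \<in> H" "a \<otimes> x = a \<otimes> y"
    have "x \<in> carrier G" "y \<in> carrier G" using xy assms(2) by blast+
    then show "x = y" using xy(3) aG Units_l_cancel[of a x y] by (simp add: Units_eq)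
  qed
  moreover have "(\<otimes>) a ` H \<subseteq> H" using assms by blast
  ultimately have img: "(\<otimes>) a ` H = H" using endo_inj_surj assms(1) by blast
  then have "a \<in> (\<otimes>) a ` H" using assms(3) by simp
  then obtain y where y0: "y \<in> H" "a = a \<otimes> y" by blast
  then have y: "y \<in> H" "a \<otimes> y = a" by simp_all
  have yG: "y \<in> carrier G" using y assms(2) by blast
  have "y = \<one>" using y(2) aG yG by simp
  then have "\<one> \<in> H" using y by simp
  then have "\<one> \<in> (\<otimes>) a ` H" using img by simp
  then obtain z where z0: "z \<in> H" "\<one> = a \<otimes> z" by blast
  then have z: "z \<in> H" "a \<otimes> z = \<one>" by simp_all
  have zG: "z \<in> carrier G" using z assms(2) by blast
  have "inv a \<otimes> (a \<otimes> z) = z" using aG zG by (simp add: m_assoc[symmetric])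
  then have "z = inv a" using z(2) aG by simp
  then show ?thesis using z by simp
qed

lemma mk_group:
  assumes sg: "is_semigroup S"
    and L: "\<forall>a\<in>carrier S. (\<lambda>s. a \<otimes>\<^bsub>S\<^esub> s) ` carrier S = carrier S"
    and R: "\<forall>a\<in>carrier S. (\<lambda>s. s \<otimes>\<^bsub>S\<^esub> a) ` carrier S = carrier S"
  shows "is_group_sgr S"
proof -
  have ne: "carrier S \<noteq> {}" and cl0: "\<forall>x\<in>carrier S. \<forall>y\<in>carrier S. x \<otimes>\<^bsub>S\<^esub> y \<in> carrier S"
    and as0: "\<forall>x\<in>carrier S. \<forall>y\<in>carrier S. \<forall>z\<in>carrier S.
        (x \<otimes>\<^bsub>S\<^esub> y) \<otimes>\<^bsub>S\<^esub> z = x \<otimes>\<^bsub>S\<^esub> (y \<otimes>\<^bsub>S\<^esub> z)"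
    using sg_facts[OF sg] by simp_all
  note cl = cl0[rule_format]
  note as = as0[rule_format]
  obtain a where a: "a \<in> carrier S" using ne by blast
  have "a \<in> (\<lambda>s. s \<otimes>\<^bsub>S\<^esub> a) ` carrier S" by (subst R[rule_format, OF a]) (rule a)
  then obtain f where f: "f \<in> carrier S" "a = f \<otimes>\<^bsub>S\<^esub> a" by (rule imageE)
  then have f: "f \<in> carrier S" "f \<otimes>\<^bsub>S\<^esub> a = a" by simp_all
  have lid: "f \<otimes>\<^bsub>S\<^esub> b = b" if b: "b \<in> carrier S" for b
  proof -
    have "b \<in> (\<lambda>s. a \<otimes>\<^bsub>S\<^esub> s) ` carrier S" by (subst L[rule_format, OF a]) (rule b)
    then obtain t where t: "t \<in> carrier S" "b = a \<otimes>\<^bsub>S\<^esub> t" by (rule imageE)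
    have "f \<otimes>\<^bsub>S\<^esub> (a \<otimes>\<^bsub>S\<^esub> t) = (f \<otimes>\<^bsub>S\<^esub> a) \<otimes>\<^bsub>S\<^esub> t"
      using as[OF f(1) a t(1)] by simp
    then show ?thesis using t f by simp
  qed
  have linv: "\<exists>y\<in>carrier S. y \<otimes>\<^bsub>S\<^esub> x = f" if x: "x \<in> carrier S" for x
  proof -
    have "f \<in> (\<lambda>s. s \<otimes>\<^bsub>S\<^esub> x) ` carrier S" by (subst R[rule_format, OF x]) (rule f(1))
    then obtain y where "y \<in> carrier S" "f = y \<otimes>\<^bsub>S\<^esub> x" by (rule imageE)
    then show ?thesis by auto
  qed
  have "group (S\<lparr>one := f\<rparr>)"
  proof (rule groupI)
    fix x y assume "x \<in> carrier (S\<lparr>one := f\<rparr>)" "y \<in> carrier (S\<lparr>one := f\<rparr>)"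
    then show "x \<otimes>\<^bsub>S\<lparr>one := f\<rparr>\<^esub> y \<in> carrier (S\<lparr>one := f\<rparr>)" using cl by simp
  next
    show "\<one>\<^bsub>S\<lparr>one := f\<rparr>\<^esub> \<in> carrier (S\<lparr>one := f\<rparr>)" using f by simp
  next
    fix x y z assume "x \<in> carrier (S\<lparr>one := f\<rparr>)" "y \<in> carrier (S\<lparr>one := f\<rparr>)" "z \<in> carrier (S\<lparr>one := f\<rparr>)"
    then show "x \<otimes>\<^bsub>S\<lparr>one := f\<rparr>\<^esub> y \<otimes>\<^bsub>S\<lparr>one := f\<rparr>\<^esub> z =
        x \<otimes>\<^bsub>S\<lparr>one := f\<rparr>\<^esub> (y \<otimes>\<^bsub>S\<lparr>one := f\<rparr>\<^esub> z)" using as by simp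
  next
    fix x assume "x \<in> carrier (S\<lparr>one := f\<rparr>)"
    then show "\<one>\<^bsub>S\<lparr>one := f\<rparr>\<^esub> \<otimes>\<^bsub>S\<lparr>one := f\<rparr>\<^esub> x = x" using lid by simp
  next
    fix x assume "x \<in> carrier (S\<lparr>one := f\<rparr>)"
    then show "\<exists>y\<in>carrier (S\<lparr>one := f\<rparr>). y \<otimes>\<^bsub>S\<lparr>one := f\<rparr>\<^esub> x = \<one>\<^bsub>S\<lparr>one := f\<rparr>\<^esub>"
      using linv by simp
  qed
  then show ?thesis unfolding is_group_sgr_def by blast
qed

lemma sigma2:
  assumes sg: "is_semigroup S"
    and h1: "subsemigroup H1 S" "H1 \<noteq> carrier S"
    and h2: "subsemigroup H2 S" "H2 \<noteq> carrier S"
    and u: "H1 \<union> H2 = carrier S"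
  shows "sigma_s S = 2"
proof -
  let ?P = "\<lambda>n. \<exists>F. finite F \<and> card F = n \<and>
                 (\<forall>H\<in>F. subsemigroup H S \<and> H \<noteq> carrier S) \<and> \<Union>F = carrier S"
  have ne: "carrier S \<noteq> {}" using sg unfolding is_semigroup_def by blast
  have d: "H1 \<noteq> H2" using u h1 by auto
  have P2: "?P 2"
    by (rule exI[of _ "{H1, H2}"]) (use d h1 h2 u in auto)
  have lb: "2 \<le> n" if Pn: "?P n" for n
  proof (rule ccontr)
    assume "\<not> 2 \<le> n"
    then have "n = 0 \<or> n = 1" by auto
    then show False
    proof
      assume "n = 0"
      then show False using Pn ne by auto
    next
      assume "n = 1"
      then obtain F where F: "card F = 1" "\<forall>H\<in>F. subsemigroup H S \<and> H \<noteq> carrier S" "\<Union>F = carrier S"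
        using Pn \<open>n = 1\<close> by blast
      then obtain H where "F = {H}" by (metis card_1_singletonE)
      then show False using F by auto
    qed
  qed
  have "(LEAST n. ?P n) = 2" by (rule Least_equality) (use P2 lb in auto)
  moreover have "\<exists>F. finite F \<and> (\<forall>H\<in>F. subsemigroup H S \<and> H \<noteq> carrier S) \<and> \<Union>F = carrier S"
    using P2 by blast
  ultimately show ?thesis unfolding sigma_s_def by (simp add: numeral_eq_enat)
qed


theorem mainTheorem1:
  fixes S :: "('a, 'b) monoid_scheme"
  assumes "is_semigroup S" and "finite (carrier S)"
  shows "(monogenic S \<longrightarrow> sigma_s S = \<infinity>)
       \<and> (\<forall>e. group (S\<lparr>one := e\<rparr>) \<longrightarrow> sigma_s S = sigma_g (S\<lparr>one := e\<rparr>))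
       \<and> (\<not> monogenic S \<and> \<not> is_group_sgr S \<longrightarrow> sigma_s S = 2)"
proof (intro conjI impI allI)
  note sg = assms(1) and fin = assms(2)
  have cl: "\<forall>x\<in>carrier S. \<forall>y\<in>carrier S. x \<otimes>\<^bsub>S\<^esub> y \<in> carrier S"
    and as: "\<forall>x\<in>carrier S. \<forall>y\<in>carrier S. \<forall>z\<in>carrier S.
        (x \<otimes>\<^bsub>S\<^esub> y) \<otimes>\<^bsub>S\<^esub> z = x \<otimes>\<^bsub>S\<^esub> (y \<otimes>\<^bsub>S\<^esub> z)"
    and ne: "carrier S \<noteq> {}"
    using sg_facts[OF sg] by simp_all
  {
    assume "monogenic S"
    then obtain a where a: "a \<in> carrier S" "sgr_generated S a = carrier S"
      unfolding monogenic_def by blast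
    have "\<not> (\<exists>F. finite F \<and> (\<forall>H\<in>F. subsemigroup H S \<and> H \<noteq> carrier S) \<and> \<Union>F = carrier S)"
    proof
      assume "\<exists>F. finite F \<and> (\<forall>H\<in>F. subsemigroup H S \<and> H \<noteq> carrier S) \<and> \<Union>F = carrier S"
      then obtain F where F: "\<forall>H\<in>F. subsemigroup H S \<and> H \<noteq> carrier S" "\<Union>F = carrier S" by blast
      then obtain H where H: "H \<in> F" "a \<in> H" using a(1) by blast
      have "subsemigroup H S" "H \<noteq> carrier S" using F H by auto
      then show False using sgr_min[of H S a] H a unfolding subsemigroup_def by blast
    qed
    then show "sigma_s S = \<infinity>" unfolding sigma_s_def by simp
  }
  {
    fix e
    assume grp: "group (S\<lparr>one := e\<rparr>)"
    let ?G = "S\<lparr>one := e\<rparr>"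
    have cG: "carrier ?G = carrier S" by simp
    have eq: "(subsemigroup H S \<and> H \<noteq> carrier S) = (subgroup H ?G \<and> H \<noteq> carrier S)" for H
    proof
      assume h: "subsemigroup H S \<and> H \<noteq> carrier S"
      have sub: "H \<subseteq> carrier ?G" "H \<noteq> {}" and mc: "\<forall>x\<in>H. \<forall>y\<in>H. x \<otimes>\<^bsub>?G\<^esub> y \<in> H"
        using h unfolding subsemigroup_def by auto
      have finH: "finite H" using sub fin finite_subset by auto
      have "subgroup H ?G"
        apply (rule group.subgroupI[OF grp sub])
        using group.fin_closed_inv[OF grp finH sub(1) _ mc] mc by auto
      then show "subgroup H ?G \<and> H \<noteq> carrier S" using h by blast
    next
      assume h: "subgroup H ?G \<and> H \<noteq> carrier S"
      then have "H \<subseteq> carrier S" "\<one>\<^bsub>?G\<^esub> \<in> H" "\<forall>x\<in>H. \<forall>y\<in>H. x \<otimes>\<^bsub>?G\<^esub> y \<in> H"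
        unfolding subgroup_def by auto
      then show "subsemigroup H S \<and> H \<noteq> carrier S" using h unfolding subsemigroup_def by auto
    qed
    show "sigma_s S = sigma_g ?G"
      unfolding sigma_s_def sigma_g_def cG eq ..
  }
  {
    assume h: "\<not> monogenic S \<and> \<not> is_group_sgr S"
    define m where "m = (\<lambda>x y. x \<otimes>\<^bsub>S\<^esub> y)"
    define m' where "m' = (\<lambda>x y. m y x)"
    let ?C = "carrier S"
    have ng: "\<forall>x\<in>?C. \<exists>H. H \<subseteq> ?C \<and> x \<in> H \<and> clsd m H \<and> H \<noteq> ?C"
    proof
      fix x assume x: "x \<in> ?C"
      have "sgr_generated S x \<noteq> ?C" using h x unfolding monogenic_def by blast
      then show "\<exists>H. H \<subseteq> ?C \<and> x \<in> H \<and> clsd m H \<and> H \<noteq> ?C"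
        using sgr_props[OF sg x] unfolding m_def by blast
    qed
    have cf: "\<And>H. clsd m' H = clsd m H" unfolding m'_def clsd_def by blast
    have ng': "\<forall>x\<in>?C. \<exists>H. H \<subseteq> ?C \<and> x \<in> H \<and> clsd m' H \<and> H \<noteq> ?C"
      using ng unfolding cf .
    have clm: "\<forall>x\<in>?C. \<forall>y\<in>?C. m x y \<in> ?C" unfolding m_def by (rule cl)
    have clm': "\<forall>x\<in>?C. \<forall>y\<in>?C. m' x y \<in> ?C"
      unfolding m'_def m_def using cl by (intro ballI) (rule cl[rule_format]; assumption)
    have asm: "\<forall>x\<in>?C. \<forall>y\<in>?C. \<forall>z\<in>?C. m (m x y) z = m x (m y z)"
      unfolding m_def by (rule as)
    have asm': "\<forall>x\<in>?C. \<forall>y\<in>?C. \<forall>z\<in>?C. m' (m' x y) z = m' x (m' y z)"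
      unfolding m'_def m_def by (intro ballI) (rule as[rule_format, symmetric]; assumption)
    have cov: "\<exists>H1 H2. H1 \<noteq> {} \<and> H1 \<subseteq> ?C \<and> clsd m H1 \<and> H1 \<noteq> ?C \<and>
                 H2 \<noteq> {} \<and> H2 \<subseteq> ?C \<and> clsd m H2 \<and> H2 \<noteq> ?C \<and> H1 \<union> H2 = ?C"
    proof (cases "\<exists>I. rid m ?C I \<and> I \<noteq> ?C")
      case True
      then show ?thesis by (rule cover_from_rid[OF clm asm fin ng])
    next
      case F1: False
      show ?thesis
      proof (cases "\<exists>I. rid m' ?C I \<and> I \<noteq> ?C")
        case True
        from cover_from_rid[OF clm' asm' fin ng' True] show ?thesis unfolding cf .
      next
        case F2: False
        have L: "\<forall>a\<in>?C. (\<lambda>s. a \<otimes>\<^bsub>S\<^esub> s) ` ?C = ?C"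
        proof
          fix a assume a: "a \<in> ?C"
          have "rid m ?C (m a ` ?C)" using a ne clm asm unfolding rid_def by auto
          then have "m a ` ?C = ?C" using F1 by blast
          then show "(\<lambda>s. a \<otimes>\<^bsub>S\<^esub> s) ` ?C = ?C" unfolding m_def .
        qed
        have R: "\<forall>a\<in>?C. (\<lambda>s. s \<otimes>\<^bsub>S\<^esub> a) ` ?C = ?C"
        proof
          fix a assume a: "a \<in> ?C"
          have "rid m' ?C (m' a ` ?C)" using a ne clm' asm' unfolding rid_def by auto
          then have "m' a ` ?C = ?C" using F2 by blast
          then show "(\<lambda>s. s \<otimes>\<^bsub>S\<^esub> a) ` ?C = ?C" unfolding m'_def m_def .
        qed
        show ?thesis using mk_group[OF sg L R] h by blast
      qed
    qed
    then obtain H1 H2 where H: "H1 \<noteq> {}" "H1 \<subseteq> ?C" "clsd m H1" "H1 \<noteq> ?C"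
                 "H2 \<noteq> {}" "H2 \<subseteq> ?C" "clsd m H2" "H2 \<noteq> ?C" "H1 \<union> H2 = ?C" by blast
    have "subsemigroup H1 S" "subsemigroup H2 S"
      using H(1,2,3,5,6,7) unfolding subsemigroup_def clsd_def m_def by simp_all
    then show "sigma_s S = 2" by (rule sigma2[OF sg _ H(4) _ H(8) H(9)])
  }
qed

end
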